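(* Let $X$ be a normed space, $U\subseteq X$ open nonempty, $Y$ a Banach space and $k\in\overline{\mathbb{N}}$. Let $\mathcal{W}\subseteq\overline{\mathbb{R}}^U$ be such that for each compact $K\subseteq U$ there exists $f_K\in\mathcal{W}$ with $\inf_{x\in K}|f_K(x)|>0$. Then $C^k_{\mathcal{W}}(U,Y)$ is complete.
   Context: $C^k_{\mathcal W}(U,Y)$: $k$ times continuously Fréchet differentiable $\gamma:U\to Y$ with $\|\gamma\|_{f,j}:=\sup_{x\in U}|f(x)|\,\|D^{(j)}\gamma(x)\|_{op}<\infty$ for all $f\in\mathcal W$, $j\in\mathbb N$, $j\le k$ ($\infty\cdot0=0$), with the locally convex topology generated by these seminorms. $\overline{\mathbb{R}}=\mathbb{R}\cup\{\pm\infty\}$, $\overline{\mathbb N}=\mathbb N\cup\{\infty\}$. *)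

theory Defs
  imports "HOL-Analysis.Analysis" "HOL-Library.Extended_Nat" "HOL-Library.Extended_Real"
begin

text \<open>Multilinear maps X^j \<rightarrow> Y are represented as functions (nat \<Rightarrow> 'a) \<Rightarrow> 'b
  that depend only on the first j arguments. The j-th Frechet derivative
  D^(j) g x is encoded as such a map: D^(j+1) g x (h, v_1, ..., v_j) = (D(D^(j) g)(x) h)(v_1,...,v_j).\<close>

primrec hderiv :: "nat \<Rightarrow> ('a::real_normed_vector \<Rightarrow> 'b::real_normed_vector) \<Rightarrow> 'a \<Rightarrow> (nat \<Rightarrow> 'a) \<Rightarrow> 'b" where
  "hderiv 0 g x v = g x"
| "hderiv (Suc j) g x v = frechet_derivative (\<lambda>y. hderiv j g y (\<lambda>i. v (Suc i))) (at x) (v 0)"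

definition mopnorm :: "nat \<Rightarrow> ((nat \<Rightarrow> 'a::real_normed_vector) \<Rightarrow> 'b::real_normed_vector) \<Rightarrow> real" where
  "mopnorm j A = Sup ((\<lambda>v. norm (A v)) ` {v. \<forall>i<j. norm (v i) \<le> 1})"

definition bounded_multilinear :: "nat \<Rightarrow> ((nat \<Rightarrow> 'a::real_normed_vector) \<Rightarrow> 'b::real_normed_vector) \<Rightarrow> bool" where
  "bounded_multilinear j A \<longleftrightarrow>
     (\<forall>v w. (\<forall>i<j. v i = w i) \<longrightarrow> A v = A w) \<and>
     (\<forall>i<j. \<forall>v. linear (\<lambda>h. A (v(i := h)))) \<and>
     bdd_above ((\<lambda>v. norm (A v)) ` {v. \<forall>i<j. norm (v i) \<le> 1})"

definition Ck :: "enat \<Rightarrow> 'a::real_normed_vector set \<Rightarrow> ('a \<Rightarrow> 'b::real_normed_vector) \<Rightarrow> bool" where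
  "Ck k U g \<longleftrightarrow>
     (\<forall>j x. enat j \<le> k \<and> x \<in> U \<longrightarrow>
        bounded_multilinear j (hderiv j g x) \<and>
        ((\<lambda>y. mopnorm j (\<lambda>v. hderiv j g y v - hderiv j g x v)) \<longlongrightarrow> 0) (at x)) \<and>
     (\<forall>j x. enat (Suc j) \<le> k \<and> x \<in> U \<longrightarrow>
        ((\<lambda>y. mopnorm j (\<lambda>v. hderiv j g y v - hderiv j g x v
                               - hderiv (Suc j) g x (case_nat (y - x) v)) / norm (y - x))
           \<longlongrightarrow> 0) (at x))"

text \<open>The weighted seminorm ||g||_{f,j} = sup_{x\<in>U} |f x| * ||D^(j) g(x)||_op, in ereal
  (with \<infinity> * 0 = 0, as in Isabelle's ereal).\<close>
definition wseminorm :: "'a::real_normed_vector set \<Rightarrow> ('a \<Rightarrow> ereal) \<Rightarrow> nat \<Rightarrow> ('a \<Rightarrow> 'b::real_normed_vector) \<Rightarrow> ereal" where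
  "wseminorm U f j g = (SUP x\<in>U. \<bar>f x\<bar> * ereal (mopnorm j (hderiv j g x)))"

definition CkW :: "enat \<Rightarrow> 'a::real_normed_vector set \<Rightarrow> ('a \<Rightarrow> ereal) set \<Rightarrow> ('a \<Rightarrow> 'b::real_normed_vector) set" where
  "CkW k U W = {g. Ck k U g \<and> (\<forall>f\<in>W. \<forall>j. enat j \<le> k \<longrightarrow> wseminorm U f j g < \<infinity>)}"

text \<open>Completeness of the locally convex space C^k_W(U,Y): every Cauchy net (given as a
  map from an index type along a proper filter, which covers directed sets) converges
  with respect to the seminorms to an element of the space.\<close>
definition CkW_complete :: "enat \<Rightarrow> 'a::real_normed_vector set \<Rightarrow> ('a \<Rightarrow> ereal) set \<Rightarrow> ('i \<Rightarrow> 'a \<Rightarrow> 'b::real_normed_vector) \<Rightarrow> 'i filter \<Rightarrow> bool" where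
  "CkW_complete k U W net F \<longleftrightarrow>
    (F \<noteq> bot \<and> (\<forall>\<^sub>F i in F. net i \<in> CkW k U W) \<and>
     (\<forall>f\<in>W. \<forall>j. enat j \<le> k \<longrightarrow> (\<forall>e>0. \<forall>\<^sub>F (a, b) in F \<times>\<^sub>F F.
         wseminorm U f j (\<lambda>x. net a x - net b x) < ereal e)))
    \<longrightarrow> (\<exists>g\<in>CkW k U W. \<forall>f\<in>W. \<forall>j. enat j \<le> k \<longrightarrow> (\<forall>e>0. \<forall>\<^sub>F a in F.
         wseminorm U f j (\<lambda>x. net a x - g x) < ereal e))"

end

theory Submission
  imports Defs
begin


type_synonym ('a,'b) ml = "(nat \<Rightarrow> 'a) \<Rightarrow> 'b"

lemma bm_dep: "bounded_multilinear j A \<Longrightarrow> (\<And>i. i<j \<Longrightarrow> v i = w i) \<Longrightarrow> A v = A w"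
  unfolding bounded_multilinear_def by blast

lemma bm_lin: "bounded_multilinear j A \<Longrightarrow> i<j \<Longrightarrow> linear (\<lambda>h. A (v(i := h)))"
  unfolding bounded_multilinear_def by blast

lemma bm_bdd: fixes A :: "('a::real_normed_vector,'b::real_normed_vector) ml"
  shows "bounded_multilinear j A \<Longrightarrow> bdd_above ((\<lambda>v. norm (A v)) ` {v. \<forall>i<j. norm (v i) \<le> 1})"
  unfolding bounded_multilinear_def by (elim conjE)

lemma mopnorm_upper:
  fixes A :: "('a::real_normed_vector,'b::real_normed_vector) ml"
  assumes "bounded_multilinear j A" "\<forall>i<j. norm (v i) \<le> 1"
  shows "norm (A v) \<le> mopnorm j A"
  unfolding mopnorm_def
proof (rule cSup_upper[OF _ bm_bdd[OF assms(1)]])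
  show "norm (A v) \<in> (\<lambda>v. norm (A v)) ` {v. \<forall>i<j. norm (v i) \<le> 1}"
    using assms(2) by (intro imageI) simp
qed

lemma mopnorm_nonneg:
  fixes A :: "('a::real_normed_vector,'b::real_normed_vector) ml"
  assumes "bounded_multilinear j A" shows "0 \<le> mopnorm j A"
proof -
  have "norm (A (\<lambda>_. 0)) \<le> mopnorm j A" by (rule mopnorm_upper[OF assms]) simp
  moreover have "0 \<le> norm (A (\<lambda>_. 0))" by simp
  ultimately show ?thesis by linarith
qed

lemma mopnorm_le:
  fixes A :: "('a::real_normed_vector,'b::real_normed_vector) ml"
  assumes "\<And>v. (\<forall>i<j. norm (v i) \<le> 1) \<Longrightarrow> norm (A v) \<le> c" shows "mopnorm j A \<le> c"
  unfolding mopnorm_def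
proof (rule cSup_least)
  have "norm (A (\<lambda>_. 0)) \<in> (\<lambda>v. norm (A v)) ` {v. \<forall>i<j. norm (v i) \<le> 1}"
    by (rule imageI) simp
  then show "(\<lambda>v. norm (A v)) ` {v. \<forall>i<j. norm (v i) \<le> 1} \<noteq> {}" by (metis empty_iff)
next
  fix x assume "x \<in> (\<lambda>v. norm (A v)) ` {v. \<forall>i<j. norm (v i) \<le> 1}"
  then obtain v where v: "\<forall>i<j. norm (v i) \<le> 1" and x: "x = norm (A v)" by (rule imageE) simp
  show "x \<le> c" unfolding x by (rule assms[OF v])
qed

lemma bm_scale:
  fixes A :: "('a::real_normed_vector,'b::real_normed_vector) ml"
  assumes "bounded_multilinear j A" "i < j"
  shows "A (v(i := c *\<^sub>R x)) = c *\<^sub>R A (v(i := x))"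
proof -
  have "linear (\<lambda>h. A (v(i := h)))" by (rule bm_lin[OF assms])
  from linear_cmul[OF this, of c x] show ?thesis .
qed

lemma bm_zero:
  fixes A B :: "('a::real_normed_vector,'b::real_normed_vector) ml"
  assumes "bounded_multilinear j A" "i < j" "v i = 0"
  shows "A v = 0"
proof -
  have "A (v(i := 0 *\<^sub>R 0)) = 0 *\<^sub>R A (v(i := 0))" by (rule bm_scale[OF assms(1,2)])
  moreover have "v(i := 0 *\<^sub>R 0) = v" using assms(3) by auto
  ultimately show ?thesis by simp
qed

lemma bm_norm_bound:
  fixes A B :: "('a::real_normed_vector,'b::real_normed_vector) ml"
  assumes A: "bounded_multilinear j A"
  shows "norm (A v) \<le> mopnorm j A * (\<Prod>i<j. norm (v i))"
proof (cases "\<exists>i<j. v i = 0")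
  case True
  then obtain i where "i<j" "v i = 0" by blast
  then have "A v = 0" using bm_zero[OF A] by blast
  moreover have p0: "(\<Prod>i<j. norm (v i)) = 0" using \<open>i<j\<close> \<open>v i = 0\<close>
    by (metis finite_lessThan lessThan_iff norm_zero prod_zero_iff)
  ultimately show ?thesis by (simp only: p0 mult_zero_right norm_zero order_refl)
next
  case False
  define u where "u m = (\<lambda>i. if i < m then v i /\<^sub>R norm (v i) else v i)" for m
  have step: "m \<le> j \<Longrightarrow> A v = (\<Prod>i<m. norm (v i)) *\<^sub>R A (u m)" for m
  proof (induction m)
    case 0
    then show ?case by (simp add: u_def)
  next
    case (Suc m)
    then have mj: "m < j" by simp
    have nz: "norm (v m) \<noteq> 0" using False mj by auto
    have e1: "u m = (u (Suc m))(m := norm (v m) *\<^sub>R (v m /\<^sub>R norm (v m)))"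
      using nz by (auto simp: u_def fun_eq_iff)
    have e2: "(u (Suc m))(m := (v m /\<^sub>R norm (v m))) = u (Suc m)"
      by (auto simp: u_def fun_eq_iff)
    have "A (u m) = norm (v m) *\<^sub>R A (u (Suc m))"
      using bm_scale[OF A mj, of "u (Suc m)" "norm (v m)" "v m /\<^sub>R norm (v m)"] e1 e2 by simp
    then show ?case using Suc by (simp add: mult.commute)
  qed
  have "A v = (\<Prod>i<j. norm (v i)) *\<^sub>R A (u j)" using step by simp
  moreover have "norm (A (u j)) \<le> mopnorm j A"
    apply (rule mopnorm_upper[OF A]) using False by (auto simp: u_def)
  moreover have "0 \<le> (\<Prod>i<j. norm (v i))" by (simp add: prod_nonneg)
  ultimately show ?thesis
    by (simp add: mult.commute mult_right_mono)
qed

lemma bm_diff: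
  fixes A B :: "('a::real_normed_vector,'b::real_normed_vector) ml"
  assumes "bounded_multilinear j A" "bounded_multilinear j B"
  shows "bounded_multilinear j (\<lambda>v. A v - B v)"
proof -
  have "bdd_above ((\<lambda>v. norm (A v - B v)) ` {v. \<forall>i<j. norm (v i) \<le> 1})"
  proof (rule bdd_aboveI2)
    fix v :: "nat \<Rightarrow> 'a" assume "v \<in> {v. \<forall>i<j. norm (v i) \<le> 1}"
    then have "norm (A v) \<le> mopnorm j A" "norm (B v) \<le> mopnorm j B"
      using mopnorm_upper assms by auto
    then show "norm (A v - B v) \<le> mopnorm j A + mopnorm j B"
      by (smt (verit) norm_triangle_ineq4)
  qed
  moreover have "\<forall>i<j. \<forall>v. linear (\<lambda>h. A (v(i := h)) - B (v(i := h)))"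
  proof (intro allI impI)
    fix i v assume "i < j"
    show "linear (\<lambda>h. A (v(i := h)) - B (v(i := h)))"
      by (rule linear_compose_sub[OF bm_lin[OF assms(1) \<open>i<j\<close>] bm_lin[OF assms(2) \<open>i<j\<close>]])
  qed
  moreover have "\<forall>v w. (\<forall>i<j. v i = w i) \<longrightarrow> A v - B v = A w - B w"
  proof (intro allI impI)
    fix v w :: "nat \<Rightarrow> 'a" assume h: "\<forall>i<j. v i = w i"
    have "A v = A w" by (rule bm_dep[OF assms(1)]) (use h in blast)
    moreover have "B v = B w" by (rule bm_dep[OF assms(2)]) (use h in blast)
    ultimately show "A v - B v = A w - B w" by simp
  qed
  ultimately show ?thesis unfolding bounded_multilinear_def by (intro conjI)
qed

lemma case_nat_upd0: "(case_nat 0 w)(0 := h) = case_nat h w"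
  by (auto simp: fun_eq_iff split: nat.split)

lemma case_nat_updS: "(case_nat h v)(Suc i := x) = case_nat h (v(i := x))"
  by (auto simp: fun_eq_iff split: nat.split)

lemma bm_shift:
  fixes A B :: "('a::real_normed_vector,'b::real_normed_vector) ml"
  assumes B: "bounded_multilinear (Suc j) B"
  shows "bounded_multilinear j (\<lambda>v. B (case_nat h v))"
proof -
  have "bdd_above ((\<lambda>v. norm (B (case_nat h v))) ` {v. \<forall>i<j. norm (v i) \<le> 1})"
  proof (rule bdd_aboveI2)
    fix v :: "nat \<Rightarrow> 'a" assume v: "v \<in> {v. \<forall>i<j. norm (v i) \<le> 1}"
    have "norm (B (case_nat h v)) \<le> mopnorm (Suc j) B * (\<Prod>i<Suc j. norm (case_nat h v i))"
      by (rule bm_norm_bound[OF B])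
    also have "(\<Prod>i<Suc j. norm (case_nat h v i)) = norm h * (\<Prod>i<j. norm (v i))"
      by (simp only: prod.lessThan_Suc_shift) simp
    also have "\<dots> \<le> norm h * 1"
      using v by (intro mult_left_mono prod_le_1) auto
    finally show "norm (B (case_nat h v)) \<le> mopnorm (Suc j) B * norm h"
      using mopnorm_nonneg[OF B] by (simp add: mult_left_mono)
  qed
  moreover have "\<forall>i<j. \<forall>v. linear (\<lambda>x. B (case_nat h (v(i := x))))"
  proof (intro allI impI)
    fix i v assume "i < j"
    have "linear (\<lambda>x. B ((case_nat h v)(Suc i := x)))" by (rule bm_lin[OF B]) (use \<open>i<j\<close> in simp)
    then show "linear (\<lambda>x. B (case_nat h (v(i := x))))" by (simp add: case_nat_updS)
  qed
  moreover have "\<forall>v w. (\<forall>i<j. v i = w i) \<longrightarrow> B (case_nat h v) = B (case_nat h w)"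
    by (intro allI impI, rule bm_dep[OF B]) (auto split: nat.split simp: less_Suc_eq_0_disj)
  ultimately show ?thesis unfolding bounded_multilinear_def by (intro conjI)
qed

lemma bl_shift:
  fixes A B :: "('a::real_normed_vector,'b::real_normed_vector) ml"
  assumes B: "bounded_multilinear (Suc j) B"
  shows "bounded_linear (\<lambda>h. B (case_nat h w))"
proof -
  have lin: "linear (\<lambda>h. B (case_nat h w))"
    using bm_lin[OF B, of 0 "case_nat 0 w"] by (simp add: case_nat_upd0)
  have "norm (B (case_nat h w)) \<le> norm h * (mopnorm (Suc j) B * (\<Prod>i<j. norm (w i)))" for h
  proof -
    have "(\<Prod>i<Suc j. norm (case_nat h w i)) = norm h * (\<Prod>i<j. norm (w i))"
      by (simp only: prod.lessThan_Suc_shift) simp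
    then show ?thesis using bm_norm_bound[OF B, of "case_nat h w"] by (simp add: algebra_simps)
  qed
  note bd = this
  show ?thesis
  proof (rule bounded_linear_intro[of _ "mopnorm (Suc j) B * (\<Prod>i<j. norm (w i))"])
    fix x y show "B (case_nat (x + y) w) = B (case_nat x w) + B (case_nat y w)"
      using linear_add[OF lin, of x y] by simp
  next
    fix r x show "B (case_nat (r *\<^sub>R x) w) = r *\<^sub>R B (case_nat x w)"
      using linear_cmul[OF lin, of r x] by simp
  next
    fix x show "norm (B (case_nat x w)) \<le> norm x * (mopnorm (Suc j) B * (\<Prod>i<j. norm (w i)))"
      by (rule bd)
  qed
qed



lemma tendsto_ratio_zero:
  fixes R :: "'a::real_normed_vector \<Rightarrow> real"
  assumes ev: "eventually (\<lambda>y. 0 \<le> R y \<and> R y \<le> G y) (at x)"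
    and G: "(G \<longlongrightarrow> 0) (at x)"
  shows "(R \<longlongrightarrow> 0) (at x)"
proof (rule tendsto_sandwich[where f="\<lambda>_. 0" and h=G])
  show "\<forall>\<^sub>F n in at x. 0 \<le> R n" using ev by (rule eventually_mono) simp
  show "\<forall>\<^sub>F n in at x. R n \<le> G n" using ev by (rule eventually_mono) simp
qed (simp_all add: G)

lemma der_from_op:
  fixes A :: "'a::real_normed_vector \<Rightarrow> ('a,'b::real_normed_vector) ml" and B :: "('a,'b) ml"
  assumes U: "open U" "x \<in> U" and Abm: "\<And>y. y\<in>U \<Longrightarrow> bounded_multilinear j (A y)"
    and B: "bounded_multilinear (Suc j) B"
    and lim: "((\<lambda>y. mopnorm j (\<lambda>v. A y v - A x v - B (case_nat (y - x) v)) / norm (y - x)) \<longlongrightarrow> 0) (at x)"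
  shows "((\<lambda>y. A y w) has_derivative (\<lambda>h. B (case_nat h w))) (at x)"
  unfolding has_derivative_iff_norm
proof (intro conjI)
  show "bounded_linear (\<lambda>h. B (case_nat h w))" by (rule bl_shift[OF B])
  define P where "P = (\<Prod>i<j. norm (w i))"
  have P0: "0 \<le> P" unfolding P_def by (simp add: prod_nonneg)
  let ?M = "\<lambda>y v. A y v - A x v - B (case_nat (y - x) v)"
  have Mbm: "bounded_multilinear j (?M y)" if "y \<in> U" for y
    by (intro bm_diff bm_shift Abm B that U)
  have ev: "eventually (\<lambda>y. 0 \<le> norm (A y w - A x w - B (case_nat (y - x) w)) / norm (y - x) \<and>
      norm (A y w - A x w - B (case_nat (y - x) w)) / norm (y - x) \<le> mopnorm j (?M y) / norm (y - x) * P) (at x)"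
    using eventually_at_in_open'[OF U]
  proof (rule eventually_mono)
    fix y assume y: "y \<in> U"
    have "norm (?M y w) \<le> mopnorm j (?M y) * P" unfolding P_def by (rule bm_norm_bound[OF Mbm[OF y]])
    then have "norm (?M y w) / norm (y - x) \<le> mopnorm j (?M y) * P / norm (y - x)"
      by (simp add: divide_right_mono)
    then show "0 \<le> norm (?M y w) / norm (y - x) \<and> norm (?M y w) / norm (y - x) \<le> mopnorm j (?M y) / norm (y - x) * P"
      by (simp add: field_simps)
  qed
  have "((\<lambda>y. mopnorm j (?M y) / norm (y - x) * P) \<longlongrightarrow> 0 * P) (at x)"
    by (intro tendsto_mult lim tendsto_const)
  then have G: "((\<lambda>y. mopnorm j (?M y) / norm (y - x) * P) \<longlongrightarrow> 0) (at x)" by simp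
  show "((\<lambda>y. norm (A y w - A x w - B (case_nat (y - x) w)) / norm (y - x)) \<longlongrightarrow> 0) (at x)"
    by (rule tendsto_ratio_zero[OF ev G])
qed

lemma Ck_bm: "Ck k U g \<Longrightarrow> enat j \<le> k \<Longrightarrow> x \<in> U \<Longrightarrow> bounded_multilinear j (hderiv j g x)"
  unfolding Ck_def by blast

lemma Ck_cont: "Ck k U g \<Longrightarrow> enat j \<le> k \<Longrightarrow> x \<in> U \<Longrightarrow>
   ((\<lambda>y. mopnorm j (\<lambda>v. hderiv j g y v - hderiv j g x v)) \<longlongrightarrow> 0) (at x)"
  unfolding Ck_def by blast

lemma Ck_dc: "Ck k U g \<Longrightarrow> enat (Suc j) \<le> k \<Longrightarrow> x \<in> U \<Longrightarrow>
   ((\<lambda>y. mopnorm j (\<lambda>v. hderiv j g y v - hderiv j g x v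
                               - hderiv (Suc j) g x (case_nat (y - x) v)) / norm (y - x)) \<longlongrightarrow> 0) (at x)"
  unfolding Ck_def by blast

lemma enat_Suc_le: "enat (Suc j) \<le> k \<Longrightarrow> enat j \<le> k"
  by (meson Suc_n_not_le_n enat_ord_simps(1) le_cases order_trans)

lemma Ck_der:
  fixes g :: "'a::real_normed_vector \<Rightarrow> 'b::real_normed_vector"
  assumes "Ck k U g" "open U" "x \<in> U" "enat (Suc j) \<le> k"
  shows "((\<lambda>y. hderiv j g y w) has_derivative (\<lambda>h. hderiv (Suc j) g x (case_nat h w))) (at x)"
  by (rule der_from_op[OF assms(2,3) Ck_bm[OF assms(1) enat_Suc_le[OF assms(4)]]
      Ck_bm[OF assms(1,4,3)] Ck_dc[OF assms(1,4,3)]])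

lemma case_nat_eta: "case_nat (v 0) (\<lambda>i. v (Suc i)) = v"
  by (auto simp: fun_eq_iff split: nat.split)

lemma hderiv_Suc_from_der:
  assumes "((\<lambda>y. hderiv j g y (\<lambda>i. v (Suc i))) has_derivative D) (at x)"
  shows "hderiv (Suc j) g x v = D (v 0)"
  using frechet_derivative_at[OF assms] by simp

lemma hderiv_diff:
  fixes g h :: "'a::real_normed_vector \<Rightarrow> 'b::real_normed_vector"
  assumes "open U" "Ck k U g" "Ck k U h"
  shows "enat j \<le> k \<Longrightarrow> x \<in> U \<Longrightarrow> hderiv j (\<lambda>x. g x - h x) x v = hderiv j g x v - hderiv j h x v"
proof (induction j arbitrary: x v)
  case 0
  then show ?case by simp
next
  case (Suc j)
  let ?w = "\<lambda>i. v (Suc i)"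
  have d: "((\<lambda>y. hderiv j g y ?w - hderiv j h y ?w) has_derivative
     (\<lambda>t. hderiv (Suc j) g x (case_nat t ?w) - hderiv (Suc j) h x (case_nat t ?w))) (at x)"
    by (intro has_derivative_diff Ck_der[OF assms(2,1)] Ck_der[OF assms(3,1)] Suc.prems)
  have "((\<lambda>y. hderiv j (\<lambda>x. g x - h x) y ?w) has_derivative
     (\<lambda>t. hderiv (Suc j) g x (case_nat t ?w) - hderiv (Suc j) h x (case_nat t ?w))) (at x)"
    by (rule has_derivative_transform_within_open[OF d assms(1) Suc.prems(2)])
       (simp add: Suc.IH[OF enat_Suc_le[OF Suc.prems(1)]])
  from hderiv_Suc_from_der[OF this] show ?case by (simp add: case_nat_eta)
qed



lemma le_eps:
  fixes a b c :: real
  assumes c: "0 \<le> c" and h: "\<And>e. e > 0 \<Longrightarrow> a \<le> b + e * c"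
  shows "a \<le> b"
proof (rule ccontr)
  assume "\<not> a \<le> b"
  then have ab: "a - b > 0" by simp
  define e where "e = (a - b) / (2 * (c + 1))"
  have e0: "e > 0" unfolding e_def using ab c by simp
  have "e * c \<le> e * (c + 1)" using e0 by simp
  also have "e * (c + 1) = (a - b) / 2" unfolding e_def using c by (simp add: field_simps)
  finally have "e * c \<le> (a - b) / 2" .
  with h[OF e0] ab show False by argo
qed

lemma prod_unit_le1: "(\<forall>i<j. norm (v i) \<le> 1) \<Longrightarrow> (\<Prod>i<j. norm (v i)) \<le> (1::real)"
  by (intro prod_le_1) auto

lemma prod_case_nat: "(\<Prod>i<Suc j. norm (case_nat h v i)) = norm h * (\<Prod>i<j. norm (v i))"
  by (simp only: prod.lessThan_Suc_shift) simp

lemma mopnorm_split: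
  fixes P Q R :: "('a::real_normed_vector,'b::real_normed_vector) ml"
  assumes "bounded_multilinear j P" "bounded_multilinear j Q" "\<And>v. R v = P v + Q v"
  shows "mopnorm j R \<le> mopnorm j P + mopnorm j Q"
proof (rule mopnorm_le)
  fix v :: "nat \<Rightarrow> 'a" assume v: "\<forall>i<j. norm (v i) \<le> 1"
  have "norm (R v) \<le> norm (P v) + norm (Q v)" unfolding assms(3) by (rule norm_triangle_ineq)
  also have "\<dots> \<le> mopnorm j P + mopnorm j Q"
    using mopnorm_upper[OF assms(1) v] mopnorm_upper[OF assms(2) v] by linarith
  finally show "norm (R v) \<le> mopnorm j P + mopnorm j Q" .
qed

lemma compact_seq_lim:
  fixes X :: "nat \<Rightarrow> 'a::metric_space"
  assumes "X \<longlonglongrightarrow> l"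
  shows "compact (insert l (range X))"
proof (rule compactI)
  fix C assume C: "\<forall>t\<in>C. open t" "insert l (range X) \<subseteq> \<Union>C"
  then obtain T where T: "T \<in> C" "l \<in> T" by blast
  then have "eventually (\<lambda>m. X m \<in> T) sequentially"
    using assms C(1) by (metis tendsto_def)
  then obtain N where N: "\<And>m. m \<ge> N \<Longrightarrow> X m \<in> T" by (auto simp: eventually_sequentially)
  have "\<forall>m. \<exists>V. V \<in> C \<and> X m \<in> V" using C(2) by blast
  then obtain V where V: "\<And>m. V m \<in> C \<and> X m \<in> V m" by metis
  let ?C = "insert T (V ` {..<N})"
  have "?C \<subseteq> C" using T V by auto
  moreover have "finite ?C" by simp
  moreover have "insert l (range X) \<subseteq> \<Union>?C"
  proof
    fix z assume "z \<in> insert l (range X)"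
    then consider "z = l" | m where "z = X m" by blast
    then show "z \<in> \<Union>?C"
    proof cases
      case 1 then show ?thesis using T by blast
    next
      case (2 m)
      show ?thesis
      proof (cases "m < N")
        case True then show ?thesis using V[of m] 2 by blast
      next
        case False then show ?thesis using N[of m] 2 by auto
      qed
    qed
  qed
  ultimately show "\<exists>C'\<subseteq>C. finite C' \<and> insert l (range X) \<subseteq> \<Union>C'" by blast
qed

lemma abs_ereal_cases: "(\<exists>c\<ge>0. \<bar>r::ereal\<bar> = ereal c) \<or> \<bar>r\<bar> = \<infinity>"
  by (cases r) auto



locale cctx =
  fixes U :: "'a::real_normed_vector set" and k :: enat and W :: "('a \<Rightarrow> ereal) set"
    and n :: "'i \<Rightarrow> 'a \<Rightarrow> 'b::banach" and F :: "'i filter"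
  assumes U: "open U"
    and HK: "\<forall>K. compact K \<and> K \<subseteq> U \<longrightarrow> (\<exists>f\<in>W. (INF x\<in>K. \<bar>f x\<bar>) > 0)"
    and Fne: "F \<noteq> bot"
    and evC: "\<forall>\<^sub>F i in F. n i \<in> CkW k U W"
    and cau: "\<forall>f\<in>W. \<forall>j. enat j \<le> k \<longrightarrow> (\<forall>e>0. \<forall>\<^sub>F (a, b) in F \<times>\<^sub>F F.
         wseminorm U f j (\<lambda>x. n a x - n b x) < ereal e)"
begin

definition L :: "nat \<Rightarrow> 'a \<Rightarrow> (nat \<Rightarrow> 'a) \<Rightarrow> 'b" where
  "L j x v = Lim F (\<lambda>a. hderiv j (n a) x v)"

lemma evCk: "\<forall>\<^sub>F a in F. Ck k U (n a)"
  using evC by (rule eventually_mono) (simp add: CkW_def)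

lemma evCk2: "\<forall>\<^sub>F (a, b) in F \<times>\<^sub>F F. Ck k U (n a) \<and> Ck k U (n b)"
  unfolding eventually_prod_filter using evCk by blast

lemma weight:
  assumes "compact K" "K \<subseteq> U"
  obtains f c where "f \<in> W" "c > 0" "\<And>x. x \<in> K \<Longrightarrow> ereal c \<le> \<bar>f x\<bar>"
proof -
  obtain f where f: "f \<in> W" "(INF x\<in>K. \<bar>f x\<bar>) > 0" using HK assms by blast
  obtain c where c: "0 < ereal c" "ereal c < (INF x\<in>K. \<bar>f x\<bar>)" using ereal_dense2[OF f(2)] by blast
  have "ereal c \<le> \<bar>f x\<bar>" if "x \<in> K" for x
    using c(2) INF_lower[OF that, of "\<lambda>x. \<bar>f x\<bar>"] by simp
  then show ?thesis using that f(1) c(1) by simp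
qed

lemma ucauchy:
  assumes K: "compact K" "K \<subseteq> U" and j: "enat j \<le> k" and e: "e > 0"
  shows "\<forall>\<^sub>F (a, b) in F \<times>\<^sub>F F. \<forall>x\<in>K. \<forall>v.
     norm (hderiv j (n a) x v - hderiv j (n b) x v) \<le> e * (\<Prod>i<j. norm (v i))"
proof -
  obtain f c where f: "f \<in> W" "c > 0" "\<And>x. x \<in> K \<Longrightarrow> ereal c \<le> \<bar>f x\<bar>"
    using weight[OF K] by blast
  have ec: "e * c > 0" using e f(2) by simp
  have E1: "\<forall>\<^sub>F (a, b) in F \<times>\<^sub>F F. wseminorm U f j (\<lambda>x. n a x - n b x) < ereal (e * c)"
    using cau f(1) j ec by blast
  show ?thesis
    using eventually_conj[OF E1 evCk2]
  proof (rule eventually_mono)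
    fix p :: "'i \<times> 'i"
    obtain a b where p: "p = (a, b)" by (cases p)
    assume "(case p of (a, b) \<Rightarrow> wseminorm U f j (\<lambda>x. n a x - n b x) < ereal (e * c)) \<and>
        (case p of (a, b) \<Rightarrow> Ck k U (n a) \<and> Ck k U (n b))"
    then have w: "wseminorm U f j (\<lambda>x. n a x - n b x) < ereal (e * c)"
      and ca: "Ck k U (n a)" and cb: "Ck k U (n b)" by (auto simp: p)
    have "\<forall>x\<in>K. \<forall>v. norm (hderiv j (n a) x v - hderiv j (n b) x v) \<le> e * (\<Prod>i<j. norm (v i))"
    proof (intro ballI allI)
      fix x v assume x: "x \<in> K"
      then have xU: "x \<in> U" using K by auto
      define D where "D = (\<lambda>v. hderiv j (n a) x v - hderiv j (n b) x v)"
      have Dbm: "bounded_multilinear j D" unfolding D_def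
        by (intro bm_diff Ck_bm[OF ca j xU] Ck_bm[OF cb j xU])
      have hd: "hderiv j (\<lambda>x. n a x - n b x) x = D"
        unfolding D_def by (rule ext) (rule hderiv_diff[OF U ca cb j xU])
      have m0: "0 \<le> mopnorm j D" by (rule mopnorm_nonneg[OF Dbm])
      have "ereal c * ereal (mopnorm j D) \<le> \<bar>f x\<bar> * ereal (mopnorm j D)"
        by (rule ereal_mult_right_mono[OF f(3)[OF x]]) (simp add: m0)
      also have "\<dots> \<le> wseminorm U f j (\<lambda>x. n a x - n b x)"
        unfolding wseminorm_def hd[symmetric] by (rule SUP_upper[OF xU])
      also have "\<dots> < ereal (e * c)" by (rule w)
      finally have "c * mopnorm j D < e * c" by simp
      then have "mopnorm j D < e" using f(2) by (simp add: mult.commute)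
      then have "norm (D v) \<le> e * (\<Prod>i<j. norm (v i))"
        using bm_norm_bound[OF Dbm, of v] by (meson mult_right_mono order_trans less_imp_le prod_nonneg norm_ge_zero)
      then show "norm (hderiv j (n a) x v - hderiv j (n b) x v) \<le> e * (\<Prod>i<j. norm (v i))"
        by (simp add: D_def)
    qed
    then show "case p of (a, b) \<Rightarrow> \<forall>x\<in>K. \<forall>v. norm (hderiv j (n a) x v - hderiv j (n b) x v) \<le> e * (\<Prod>i<j. norm (v i))"
      by (simp add: p)
  qed
qed

lemma conv:
  assumes x: "x \<in> U" and j: "enat j \<le> k"
  shows "((\<lambda>a. hderiv j (n a) x v) \<longlongrightarrow> L j x v) F"
proof -
  let ?h = "\<lambda>a. hderiv j (n a) x v"
  define P where "P = (\<Prod>i<j. norm (v i))"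
  have P0: "0 \<le> P" unfolding P_def by (simp add: prod_nonneg)
  have "cauchy_filter (filtermap ?h F)"
    unfolding cauchy_filter_metric_filtermap
  proof (intro allI impI)
    fix e :: real assume e: "e > 0"
    have e': "e / (2 * (P + 1)) > 0" using e P0 by simp
    have "\<forall>\<^sub>F (a, b) in F \<times>\<^sub>F F. \<forall>y\<in>{x}. \<forall>v.
       norm (hderiv j (n a) y v - hderiv j (n b) y v) \<le> e / (2 * (P + 1)) * (\<Prod>i<j. norm (v i))"
      by (rule ucauchy[OF _ _ j e']) (use x in auto)
    then obtain Pf Pg where PP: "eventually Pf F" "eventually Pg F"
      "\<And>a b. Pf a \<Longrightarrow> Pg b \<Longrightarrow> norm (?h a - ?h b) \<le> e / (2 * (P + 1)) * P"
      unfolding eventually_prod_filter P_def by fastforce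
    have bnd: "e / (2 * (P + 1)) * P < e"
    proof -
      have "e / (2 * (P + 1)) * P = e * (P / (2 * (P + 1)))" by simp
      also have "P / (2 * (P + 1)) < 1" using P0 by (simp add: field_simps)
      then have "e * (P / (2 * (P + 1))) < e * 1" using e by (intro mult_strict_left_mono) auto
      finally show ?thesis by simp
    qed
    show "\<exists>Q. eventually Q F \<and> (\<forall>a b. Q a \<and> Q b \<longrightarrow> dist (?h a) (?h b) < e)"
    proof (rule exI[of _ "\<lambda>a. Pf a \<and> Pg a"], intro conjI allI impI)
      show "eventually (\<lambda>a. Pf a \<and> Pg a) F" using PP(1,2) by (rule eventually_conj)
      fix a b assume "(Pf a \<and> Pg a) \<and> Pf b \<and> Pg b"
      then have "norm (?h a - ?h b) \<le> e / (2 * (P + 1)) * P" using PP(3) by blast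
      then show "dist (?h a) (?h b) < e" using bnd by (simp add: dist_norm)
    qed
  qed
  moreover have "filtermap ?h F \<le> principal UNIV" by simp
  moreover have "filtermap ?h F \<noteq> bot" using Fne by (simp add: filtermap_bot_iff)
  ultimately obtain l where "filtermap ?h F \<le> nhds l"
    using cauchy_filter_complete_converges[OF _ complete_UNIV] by blast
  then have "(?h \<longlongrightarrow> l) F" by (simp add: filterlim_def)
  moreover from this have "L j x v = l" unfolding L_def using Fne by (intro tendsto_Lim) simp_all
  ultimately show ?thesis by simp
qed

end


context cctx begin

lemma unif:
  assumes K: "compact K" "K \<subseteq> U" and j: "enat j \<le> k" and e: "e > 0"
  shows "\<forall>\<^sub>F a in F. \<forall>x\<in>K. \<forall>v. norm (hderiv j (n a) x v - L j x v) \<le> e * (\<Prod>i<j. norm (v i))"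
proof -
  obtain Pf Pg where PP: "eventually Pf F" "eventually Pg F"
    "\<And>a b. Pf a \<Longrightarrow> Pg b \<Longrightarrow> \<forall>x\<in>K. \<forall>v. norm (hderiv j (n a) x v - hderiv j (n b) x v) \<le> e * (\<Prod>i<j. norm (v i))"
    using ucauchy[OF K j e] unfolding eventually_prod_filter by fastforce
  show ?thesis using PP(1)
  proof (rule eventually_mono)
    fix a assume a: "Pf a"
    show "\<forall>x\<in>K. \<forall>v. norm (hderiv j (n a) x v - L j x v) \<le> e * (\<Prod>i<j. norm (v i))"
    proof (intro ballI allI)
      fix x v assume x: "x \<in> K"
      have "((\<lambda>b. norm (hderiv j (n a) x v - hderiv j (n b) x v)) \<longlongrightarrow> norm (hderiv j (n a) x v - L j x v)) F"
        by (intro tendsto_norm tendsto_diff tendsto_const conv) (use x K j in auto)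
      moreover have "\<forall>\<^sub>F b in F. norm (hderiv j (n a) x v - hderiv j (n b) x v) \<le> e * (\<Prod>i<j. norm (v i))"
        using PP(2) by (rule eventually_mono) (use PP(3)[OF a] x in blast)
      ultimately show "norm (hderiv j (n a) x v - L j x v) \<le> e * (\<Prod>i<j. norm (v i))"
        using Fne by (intro tendsto_upperbound) auto
    qed
  qed
qed

lemma unif1:
  assumes K: "compact K" "K \<subseteq> U" and j: "enat j \<le> k" and e: "e > 0"
  shows "\<forall>\<^sub>F a in F. Ck k U (n a) \<and> (\<forall>x\<in>K. \<forall>v. (\<forall>i<j. norm (v i) \<le> 1) \<longrightarrow> norm (hderiv j (n a) x v - L j x v) \<le> e)"
  using eventually_conj[OF evCk unif[OF K j e]]
proof (rule eventually_mono)
  fix a assume h: "Ck k U (n a) \<and> (\<forall>x\<in>K. \<forall>v. norm (hderiv j (n a) x v - L j x v) \<le> e * (\<Prod>i<j. norm (v i)))"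
  show "Ck k U (n a) \<and> (\<forall>x\<in>K. \<forall>v. (\<forall>i<j. norm (v i) \<le> 1) \<longrightarrow> norm (hderiv j (n a) x v - L j x v) \<le> e)"
  proof (intro conjI ballI allI impI)
    show "Ck k U (n a)" using h by blast
    fix x and v :: "nat \<Rightarrow> 'a" assume x: "x \<in> K" and v: "\<forall>i<j. norm (v i) \<le> 1"
    have "norm (hderiv j (n a) x v - L j x v) \<le> e * (\<Prod>i<j. norm (v i))" using h x by blast
    also have "\<dots> \<le> e * 1" using prod_unit_le1[OF v] e by (intro mult_left_mono) auto
    finally show "norm (hderiv j (n a) x v - L j x v) \<le> e" by simp
  qed
qed

lemma L_bm:
  assumes x: "x \<in> U" and j: "enat j \<le> k"
  shows "bounded_multilinear j (L j x)"
proof -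
  have cv: "((\<lambda>a. hderiv j (n a) x v) \<longlongrightarrow> L j x v) F" for v by (rule conv[OF x j])
  have dep: "\<forall>v w. (\<forall>i<j. v i = w i) \<longrightarrow> L j x v = L j x w"
  proof (intro allI impI)
    fix v w :: "nat \<Rightarrow> 'a" assume h: "\<forall>i<j. v i = w i"
    have eq: "\<forall>\<^sub>F a in F. hderiv j (n a) x w = hderiv j (n a) x v"
      using evCk by (rule eventually_mono) (rule bm_dep[OF Ck_bm[OF _ j x]], assumption, use h in auto)
    have "((\<lambda>a. hderiv j (n a) x w) \<longlongrightarrow> L j x v) F"
      unfolding tendsto_cong[OF eq] by (rule cv)
    then show "L j x v = L j x w" using cv[of w] Fne by (intro tendsto_unique) auto
  qed
  have lin: "\<forall>i<j. \<forall>v. linear (\<lambda>h. L j x (v(i := h)))"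
  proof (intro allI impI)
    fix i v assume i: "i < j"
    show "linear (\<lambda>h. L j x (v(i := h)))"
    proof (rule linearI)
      fix b1 b2
      have eq: "\<forall>\<^sub>F a in F. hderiv j (n a) x (v(i := b1)) + hderiv j (n a) x (v(i := b2)) = hderiv j (n a) x (v(i := b1 + b2))"
        using evCk by (rule eventually_mono) (use linear_add[OF bm_lin[OF Ck_bm[OF _ j x] i]] in metis)
      have "((\<lambda>a. hderiv j (n a) x (v(i := b1)) + hderiv j (n a) x (v(i := b2))) \<longlongrightarrow> L j x (v(i := b1)) + L j x (v(i := b2))) F"
        by (intro tendsto_add cv)
      then have "((\<lambda>a. hderiv j (n a) x (v(i := b1 + b2))) \<longlongrightarrow> L j x (v(i := b1)) + L j x (v(i := b2))) F"
        unfolding tendsto_cong[OF eq] .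
      then show "L j x (v(i := b1 + b2)) = L j x (v(i := b1)) + L j x (v(i := b2))"
        using cv Fne by (intro tendsto_unique) auto
    next
      fix r b
      have eq: "\<forall>\<^sub>F a in F. r *\<^sub>R hderiv j (n a) x (v(i := b)) = hderiv j (n a) x (v(i := r *\<^sub>R b))"
        using evCk by (rule eventually_mono) (use linear_cmul[OF bm_lin[OF Ck_bm[OF _ j x] i]] in metis)
      have "((\<lambda>a. r *\<^sub>R hderiv j (n a) x (v(i := b))) \<longlongrightarrow> r *\<^sub>R L j x (v(i := b))) F"
        by (intro tendsto_scaleR tendsto_const cv)
      then have "((\<lambda>a. hderiv j (n a) x (v(i := r *\<^sub>R b))) \<longlongrightarrow> r *\<^sub>R L j x (v(i := b))) F"
        unfolding tendsto_cong[OF eq] .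
      then show "L j x (v(i := r *\<^sub>R b)) = r *\<^sub>R L j x (v(i := b))"
        using cv Fne by (intro tendsto_unique) auto
    qed
  qed
  obtain a where a: "Ck k U (n a)" "\<forall>y\<in>{x}. \<forall>v. (\<forall>i<j. norm (v i) \<le> 1) \<longrightarrow> norm (hderiv j (n a) y v - L j y v) \<le> 1"
    using eventually_happens'[OF Fne unif1[of "{x}" j 1]] x j by auto
  have bdd: "bdd_above ((\<lambda>v. norm (L j x v)) ` {v. \<forall>i<j. norm (v i) \<le> 1})"
  proof (rule bdd_aboveI2)
    fix v :: "nat \<Rightarrow> 'a" assume "v \<in> {v. \<forall>i<j. norm (v i) \<le> 1}"
    then have v: "\<forall>i<j. norm (v i) \<le> 1" by simp
    have "norm (L j x v) \<le> norm (hderiv j (n a) x v) + norm (hderiv j (n a) x v - L j x v)"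
      by (metis norm_triangle_ineq2 add.commute diff_le_eq norm_minus_commute)
    also have "\<dots> \<le> mopnorm j (hderiv j (n a) x) + 1"
      using mopnorm_upper[OF Ck_bm[OF a(1) j x] v] a(2) v by (intro add_mono) auto
    finally show "norm (L j x v) \<le> mopnorm j (hderiv j (n a) x) + 1" .
  qed
  show ?thesis unfolding bounded_multilinear_def using dep lin bdd by (intro conjI)
qed

end


lemma tri3: fixes a b c d :: "'b::real_normed_vector"
  shows "norm (a - d) \<le> norm (a - b) + norm (b - c) + norm (c - d)"
proof -
  have "a - d = (a - b) + ((b - c) + (c - d))" by simp
  then have "norm (a - d) \<le> norm (a - b) + norm ((b - c) + (c - d))" by (metis norm_triangle_ineq)
  also have "norm ((b - c) + (c - d)) \<le> norm (b - c) + norm (c - d)" by (rule norm_triangle_ineq)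
  finally show ?thesis by simp
qed

lemma norm4: fixes a b c d :: "'b::real_normed_vector"
  shows "norm (a + b + c + d) \<le> norm a + norm b + norm c + norm d"
  by (smt (verit) norm_triangle_ineq)

lemma seg_param: "x + t *\<^sub>R (y - x) \<in> closed_segment x y" if "t \<in> {0..1}"
  unfolding in_segment using that by (intro exI[of _ t]) (auto simp: algebra_simps)

context cctx begin

lemma L_cont:
  assumes x: "x \<in> U" and j: "enat j \<le> k"
  shows "((\<lambda>y. mopnorm j (\<lambda>v. L j y v - L j x v)) \<longlongrightarrow> 0) (at x)"
proof -
  have "((\<lambda>y. mopnorm j (\<lambda>v. L j y v - L j x v)) \<longlongrightarrow> 0) (at x within U)"
    unfolding tendsto_at_iff_sequentially
  proof (intro allI impI)
    fix X assume XU: "\<forall>i. X i \<in> U - {x}" and Xl: "X \<longlonglongrightarrow> x"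
    let ?K = "insert x (range X)"
    have Kc: "compact ?K" by (rule compact_seq_lim[OF Xl])
    have KU: "?K \<subseteq> U" using XU x by auto
    show "((\<lambda>y. mopnorm j (\<lambda>v. L j y v - L j x v)) \<circ> X) \<longlonglongrightarrow> 0"
      unfolding tendsto_iff
    proof (intro allI impI)
      fix e :: real assume e: "e > 0"
      obtain a where a: "Ck k U (n a)"
        and ua: "\<forall>y\<in>?K. \<forall>v. (\<forall>i<j. norm (v i) \<le> 1) \<longrightarrow> norm (hderiv j (n a) y v - L j y v) \<le> e / 4"
        using eventually_happens'[OF Fne unif1[OF Kc KU j, of "e/4"]] e by auto
      have cc: "((\<lambda>y. mopnorm j (\<lambda>v. hderiv j (n a) y v - hderiv j (n a) x v)) \<longlongrightarrow> 0) (at x)"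
        by (rule Ck_cont[OF a j x])
      have sq: "((\<lambda>y. mopnorm j (\<lambda>v. hderiv j (n a) y v - hderiv j (n a) x v)) \<circ> X) \<longlonglongrightarrow> 0"
        using cc unfolding tendsto_at_iff_sequentially using XU Xl by auto
      have e4: "e / 4 > 0" using e by simp
      have ev: "eventually (\<lambda>m. dist (((\<lambda>y. mopnorm j (\<lambda>v. hderiv j (n a) y v - hderiv j (n a) x v)) \<circ> X) m) 0 < e / 4) sequentially"
        by (rule tendsto_iff[THEN iffD1, OF sq, rule_format, OF e4])
      show "eventually (\<lambda>m. dist (((\<lambda>y. mopnorm j (\<lambda>v. L j y v - L j x v)) \<circ> X) m) 0 < e) sequentially"
        using ev
      proof (rule eventually_mono)
        fix m assume "dist (((\<lambda>y. mopnorm j (\<lambda>v. hderiv j (n a) y v - hderiv j (n a) x v)) \<circ> X) m) 0 < e / 4"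
        then have m1: "mopnorm j (\<lambda>v. hderiv j (n a) (X m) v - hderiv j (n a) x v) < e / 4" by simp
        have XmU: "X m \<in> U" using XU by auto
        have Dbm: "bounded_multilinear j (\<lambda>v. hderiv j (n a) (X m) v - hderiv j (n a) x v)"
          by (intro bm_diff Ck_bm[OF a j XmU] Ck_bm[OF a j x])
        have bd: "mopnorm j (\<lambda>v. L j (X m) v - L j x v) \<le> 3 * e / 4"
        proof (rule mopnorm_le)
          fix v :: "nat \<Rightarrow> 'a" assume v: "\<forall>i<j. norm (v i) \<le> 1"
          have "norm (L j (X m) v - L j x v) \<le> norm (L j (X m) v - hderiv j (n a) (X m) v)
             + norm (hderiv j (n a) (X m) v - hderiv j (n a) x v) + norm (hderiv j (n a) x v - L j x v)"
            by (rule tri3)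
          moreover have "norm (L j (X m) v - hderiv j (n a) (X m) v) \<le> e / 4"
            using ua v by (simp add: norm_minus_commute)
          moreover have "norm (hderiv j (n a) (X m) v - hderiv j (n a) x v) \<le> e / 4"
            using mopnorm_upper[OF Dbm v] m1 by simp
          moreover have "norm (hderiv j (n a) x v - L j x v) \<le> e / 4"
            using ua v by simp
          ultimately show "norm (L j (X m) v - L j x v) \<le> 3 * e / 4" by simp
        qed
        have "0 \<le> mopnorm j (\<lambda>v. L j (X m) v - L j x v)"
          by (intro mopnorm_nonneg bm_diff L_bm XmU x j)
        with bd e show "dist (((\<lambda>y. mopnorm j (\<lambda>v. L j y v - L j x v)) \<circ> X) m) 0 < e" by simp
      qed
    qed
  qed
  then show ?thesis using at_within_open[OF x U] by simp
qed

end


lemma bnd_eps: fixes z :: "'b::real_normed_vector" and v :: "nat \<Rightarrow> 'a::real_normed_vector"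
  assumes "norm z \<le> e * (\<Prod>i<j. norm (v i))" "\<forall>i<j. norm (v i) \<le> 1" "e > 0"
  shows "norm z \<le> e"
proof -
  have "e * (\<Prod>i<j. norm (v i)) \<le> e * 1"
    using prod_unit_le1[OF assms(2)] assms(3) by (intro mult_left_mono) auto
  then show ?thesis using assms(1) by simp
qed

lemma bnd_eps2: fixes z :: "'b::real_normed_vector" and v :: "nat \<Rightarrow> 'a::real_normed_vector"
  assumes "norm z \<le> e * (\<Prod>i<Suc j. norm (case_nat h v i))" "\<forall>i<j. norm (v i) \<le> 1" "e > 0"
  shows "norm z \<le> e * norm h"
proof -
  have "(\<Prod>i<Suc j. norm (case_nat h v i)) = norm h * (\<Prod>i<j. norm (v i))" by (rule prod_case_nat)
  also have "\<dots> \<le> norm h * 1"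
    using prod_unit_le1[OF assms(2)] by (intro mult_left_mono) auto
  finally have "e * (\<Prod>i<Suc j. norm (case_nat h v i)) \<le> e * norm h"
    using assms(3) by (intro mult_left_mono) auto
  then show ?thesis using assms(1) by simp
qed

context cctx begin

lemma MV:
  assumes j: "enat (Suc j) \<le> k" and x: "x \<in> U" and SU: "closed_segment x y \<subseteq> U"
    and Bb: "\<And>z. z \<in> closed_segment x y \<Longrightarrow> mopnorm (Suc j) (\<lambda>v. L (Suc j) z v - L (Suc j) x v) \<le> B"
    and v: "\<forall>i<j. norm (v i) \<le> 1"
  shows "norm (L j y v - L j x v - L (Suc j) x (case_nat (y - x) v)) \<le> B * norm (y - x)"
proof -
  let ?S = "closed_segment x y"
  have Sc: "compact ?S" by simp
  have j0: "enat j \<le> k" by (rule enat_Suc_le[OF j])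
  have yU: "y \<in> U" using SU by auto
  have B0: "0 \<le> B"
    using Bb[of x] mopnorm_nonneg[OF bm_diff[OF L_bm[OF x j] L_bm[OF x j]]] by simp
  define r where "r = norm (y - x)"
  have r0: "0 \<le> r" unfolding r_def by simp
  have P1: "(\<Prod>i<j. norm (v i)) \<le> 1" by (rule prod_unit_le1[OF v])
  have P0: "0 \<le> (\<Prod>i<j. norm (v i))" by (simp add: prod_nonneg)
  show ?thesis unfolding r_def[symmetric]
  proof (rule le_eps[of "3 * r + 2"])
    show "0 \<le> 3 * r + 2" using r0 by simp
    fix \<epsilon> :: real assume \<epsilon>: "\<epsilon> > 0"
    obtain a where a: "Ck k U (n a)"
      and u1: "\<forall>z\<in>?S. \<forall>w. norm (hderiv (Suc j) (n a) z w - L (Suc j) z w) \<le> \<epsilon> * (\<Prod>i<Suc j. norm (w i))"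
      and u0: "\<forall>z\<in>?S. \<forall>w. norm (hderiv j (n a) z w - L j z w) \<le> \<epsilon> * (\<Prod>i<j. norm (w i))"
      using eventually_happens'[OF Fne eventually_conj[OF evCk eventually_conj[OF unif[OF Sc SU j \<epsilon>] unif[OF Sc SU j0 \<epsilon>]]]]
      by blast
    define f where "f = (\<lambda>z. hderiv j (n a) z v)"
    define f' where "f' = (\<lambda>z h. hderiv (Suc j) (n a) z (case_nat h v))"
    have der: "(f has_derivative f' z) (at z within ?S)" if "z \<in> ?S" for z
    proof -
      have zU: "z \<in> U" using that SU by auto
      show ?thesis unfolding f_def f'_def
        by (rule has_derivative_subset[OF Ck_der[OF a U zU j] subset_UNIV])
    qed
    have on: "onorm (f' z - f' x) \<le> B + 2 * \<epsilon>" if z: "z \<in> ?S" for z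
    proof (rule onorm_bound)
      show "0 \<le> B + 2 * \<epsilon>" using B0 \<epsilon> by simp
      fix h :: 'a
      let ?c = "case_nat h v"
      have pc: "(\<Prod>i<Suc j. norm (?c i)) = norm h * (\<Prod>i<j. norm (v i))" by (rule prod_case_nat)
      have pc1: "norm h * (\<Prod>i<j. norm (v i)) \<le> norm h" using P1 by (simp add: mult_left_le)
      have zU: "z \<in> U" using z SU by auto
      have "norm ((f' z - f' x) h) = norm (hderiv (Suc j) (n a) z ?c - hderiv (Suc j) (n a) x ?c)"
        by (simp add: f'_def)
      also have "\<dots> \<le> norm (hderiv (Suc j) (n a) z ?c - L (Suc j) z ?c) + norm (L (Suc j) z ?c - L (Suc j) x ?c)
          + norm (L (Suc j) x ?c - hderiv (Suc j) (n a) x ?c)" by (rule tri3)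
      also have "\<dots> \<le> \<epsilon> * norm h + B * norm h + \<epsilon> * norm h"
      proof (intro add_mono)
        show "norm (hderiv (Suc j) (n a) z ?c - L (Suc j) z ?c) \<le> \<epsilon> * norm h"
          by (rule bnd_eps2[OF _ v \<epsilon>]) (use u1 z in blast)
        show "norm (L (Suc j) x ?c - hderiv (Suc j) (n a) x ?c) \<le> \<epsilon> * norm h"
          by (rule bnd_eps2[OF _ v \<epsilon>]) (subst norm_minus_commute, rule u1[rule_format, OF ends_in_segment(1)])
        have bm: "bounded_multilinear (Suc j) (\<lambda>w. L (Suc j) z w - L (Suc j) x w)"
          by (intro bm_diff L_bm zU x j)
        have "norm (L (Suc j) z ?c - L (Suc j) x ?c) \<le> mopnorm (Suc j) (\<lambda>w. L (Suc j) z w - L (Suc j) x w) * (norm h * (\<Prod>i<j. norm (v i)))"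
          using bm_norm_bound[OF bm, of ?c] pc by simp
        also have "\<dots> \<le> B * norm h"
          by (rule mult_mono) (use Bb[OF z] pc1 B0 P0 in auto)
        finally show "norm (L (Suc j) z ?c - L (Suc j) x ?c) \<le> B * norm h" .
      qed
      finally show "norm ((f' z - f' x) h) \<le> (B + 2 * \<epsilon>) * norm h" by (simp add: algebra_simps)
    qed
    have mvt: "norm (f y - f x - f' x (y - x)) \<le> norm (y - x) * (B + 2 * \<epsilon>)"
      by (rule differentiable_bound_linearization[where S="?S"])
         (auto intro: seg_param der on)
    have t1: "norm (L j y v - f y) \<le> \<epsilon>"
      unfolding f_def by (rule bnd_eps[OF _ v \<epsilon>]) (subst norm_minus_commute, rule u0[rule_format, OF ends_in_segment(2)])
    have t2: "norm (f x - L j x v) \<le> \<epsilon>"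
      unfolding f_def by (rule bnd_eps[OF _ v \<epsilon>]) (rule u0[rule_format, OF ends_in_segment(1)])
    have t3: "norm (f' x (y - x) - L (Suc j) x (case_nat (y - x) v)) \<le> \<epsilon> * r"
      unfolding f'_def r_def by (rule bnd_eps2[OF _ v \<epsilon>]) (rule u1[rule_format, OF ends_in_segment(1)])
    have eq: "L j y v - L j x v - L (Suc j) x (case_nat (y - x) v) =
      (f y - f x - f' x (y - x)) + (L j y v - f y) + (f x - L j x v) + (f' x (y - x) - L (Suc j) x (case_nat (y - x) v))"
      by simp
    have "norm (L j y v - L j x v - L (Suc j) x (case_nat (y - x) v)) \<le>
      norm (f y - f x - f' x (y - x)) + norm (L j y v - f y) + norm (f x - L j x v) + norm (f' x (y - x) - L (Suc j) x (case_nat (y - x) v))"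
      unfolding eq by (rule norm4)
    also have "\<dots> \<le> r * (B + 2 * \<epsilon>) + \<epsilon> + \<epsilon> + \<epsilon> * r"
      using mvt t1 t2 t3 unfolding r_def by (intro add_mono) auto
    finally show "norm (L j y v - L j x v - L (Suc j) x (case_nat (y - x) v)) \<le> B * r + \<epsilon> * (3 * r + 2)"
      by (simp add: algebra_simps)
  qed
qed

end


context cctx begin

lemma L_dc:
  assumes j: "enat (Suc j) \<le> k" and x: "x \<in> U"
  shows "((\<lambda>y. mopnorm j (\<lambda>v. L j y v - L j x v - L (Suc j) x (case_nat (y - x) v)) / norm (y - x)) \<longlongrightarrow> 0) (at x)"
  unfolding tendsto_iff
proof (intro allI impI)
  fix e :: real assume e: "e > 0"
  have j0: "enat j \<le> k" by (rule enat_Suc_le[OF j])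
  have e2: "e / 2 > 0" using e by simp
  have "eventually (\<lambda>z. dist (mopnorm (Suc j) (\<lambda>v. L (Suc j) z v - L (Suc j) x v)) 0 < e / 2) (at x)"
    by (rule tendsto_iff[THEN iffD1, OF L_cont[OF x j], rule_format, OF e2])
  then obtain d where d: "d > 0"
    "\<And>z. z \<noteq> x \<Longrightarrow> dist z x < d \<Longrightarrow> dist (mopnorm (Suc j) (\<lambda>v. L (Suc j) z v - L (Suc j) x v)) 0 < e / 2"
    unfolding eventually_at by blast
  obtain d2 where d2: "d2 > 0" "ball x d2 \<subseteq> U" using U x openE by blast
  define \<delta> where "\<delta> = min d d2"
  have \<delta>0: "\<delta> > 0" unfolding \<delta>_def using d d2 by simp
  show "eventually (\<lambda>y. dist (mopnorm j (\<lambda>v. L j y v - L j x v - L (Suc j) x (case_nat (y - x) v)) / norm (y - x)) 0 < e) (at x)"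
    unfolding eventually_at
  proof (intro exI[of _ \<delta>] conjI ballI impI)
    show "\<delta> > 0" by (rule \<delta>0)
    fix y assume y: "y \<noteq> x \<and> dist y x < \<delta>"
    have yb: "y \<in> ball x \<delta>" using y by (simp add: dist_commute)
    have xb: "x \<in> ball x \<delta>" using \<delta>0 by simp
    have seg: "closed_segment x y \<subseteq> ball x \<delta>" by (rule closed_segment_subset[OF xb yb convex_ball])
    have "ball x \<delta> \<subseteq> ball x d2" unfolding \<delta>_def by (rule subset_ball) simp
    then have SU: "closed_segment x y \<subseteq> U" using seg d2(2) by blast
    have yU: "y \<in> U" using SU by auto
    have Bb: "mopnorm (Suc j) (\<lambda>v. L (Suc j) z v - L (Suc j) x v) \<le> e / 2" if z: "z \<in> closed_segment x y" for z
    proof (cases "z = x")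
      case True
      show ?thesis unfolding True by (rule mopnorm_le) (use e in simp)
    next
      case False
      have "dist z x < \<delta>" using seg z by (auto simp: dist_commute)
      then have "dist z x < d" unfolding \<delta>_def by simp
      from d(2)[OF False this] show ?thesis by simp
    qed
    have r: "norm (y - x) > 0" using y by simp
    let ?M = "\<lambda>v. L j y v - L j x v - L (Suc j) x (case_nat (y - x) v)"
    have M: "mopnorm j ?M \<le> e / 2 * norm (y - x)"
    proof (rule mopnorm_le)
      fix v :: "nat \<Rightarrow> 'a" assume v: "\<forall>i<j. norm (v i) \<le> 1"
      show "norm (?M v) \<le> e / 2 * norm (y - x)" by (rule MV[OF j x SU Bb v])
    qed
    have M0: "0 \<le> mopnorm j ?M"
      by (intro mopnorm_nonneg bm_diff bm_shift L_bm yU x j0 j)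
    define R where "R = mopnorm j ?M / norm (y - x)"
    have R1: "R \<le> e / 2" unfolding R_def using M r by (simp add: divide_le_eq)
    have R0: "0 \<le> R" unfolding R_def using M0 r by simp
    have "dist R 0 = R" using R0 by (simp add: dist_real_def)
    then have "dist R 0 < e" using R1 e by linarith
    then show "dist (mopnorm j ?M / norm (y - x)) 0 < e" unfolding R_def .
  qed
qed

lemma L_der:
  assumes j: "enat (Suc j) \<le> k" and x: "x \<in> U"
  shows "((\<lambda>y. L j y w) has_derivative (\<lambda>h. L (Suc j) x (case_nat h w))) (at x)"
  by (rule der_from_op[OF U x _ L_bm[OF x j] L_dc[OF j x]]) (rule L_bm[OF _ enat_Suc_le[OF j]])

definition gl :: "'a \<Rightarrow> 'b" where "gl x = L 0 x (\<lambda>_. 0)"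

lemma ident: "enat j \<le> k \<Longrightarrow> x \<in> U \<Longrightarrow> hderiv j gl x v = L j x v"
proof (induction j arbitrary: x v)
  case 0
  then show ?case by (simp add: gl_def L_def)
next
  case (Suc j)
  have j0: "enat j \<le> k" by (rule enat_Suc_le[OF Suc.prems(1)])
  let ?w = "\<lambda>i. v (Suc i)"
  have d: "((\<lambda>y. L j y ?w) has_derivative (\<lambda>h. L (Suc j) x (case_nat h ?w))) (at x)"
    by (rule L_der[OF Suc.prems])
  have "((\<lambda>y. hderiv j gl y ?w) has_derivative (\<lambda>h. L (Suc j) x (case_nat h ?w))) (at x)"
    by (rule has_derivative_transform_within_open[OF d U Suc.prems(2)]) (rule sym, rule Suc.IH[OF j0])
  from hderiv_Suc_from_der[OF this] show ?case by (simp only: case_nat_eta)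
qed

lemma ident': "enat j \<le> k \<Longrightarrow> x \<in> U \<Longrightarrow> hderiv j gl x = L j x"
  by (rule ext) (rule ident)

lemma gl_Ck: "Ck k U gl"
  unfolding Ck_def
proof (intro conjI allI impI)
  fix j x assume h: "enat j \<le> k \<and> x \<in> U"
  then have j: "enat j \<le> k" and x: "x \<in> U" by auto
  show "bounded_multilinear j (hderiv j gl x)" unfolding ident'[OF j x] by (rule L_bm[OF x j])
  have eq: "\<forall>\<^sub>F y in at x. mopnorm j (\<lambda>v. L j y v - L j x v) = mopnorm j (\<lambda>v. hderiv j gl y v - hderiv j gl x v)"
    using eventually_at_in_open'[OF U x] by (rule eventually_mono) (simp add: ident'[OF j] x)
  show "((\<lambda>y. mopnorm j (\<lambda>v. hderiv j gl y v - hderiv j gl x v)) \<longlongrightarrow> 0) (at x)"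
    using L_cont[OF x j] unfolding tendsto_cong[OF eq] .
next
  fix j x assume h: "enat (Suc j) \<le> k \<and> x \<in> U"
  then have j: "enat (Suc j) \<le> k" and x: "x \<in> U" by auto
  have j0: "enat j \<le> k" by (rule enat_Suc_le[OF j])
  have eq: "\<forall>\<^sub>F y in at x. mopnorm j (\<lambda>v. L j y v - L j x v - L (Suc j) x (case_nat (y - x) v)) / norm (y - x) =
      mopnorm j (\<lambda>v. hderiv j gl y v - hderiv j gl x v - hderiv (Suc j) gl x (case_nat (y - x) v)) / norm (y - x)"
    using eventually_at_in_open'[OF U x] by (rule eventually_mono) (simp only: ident'[OF j0] ident'[OF j x] x)
  show "((\<lambda>y. mopnorm j (\<lambda>v. hderiv j gl y v - hderiv j gl x v - hderiv (Suc j) gl x (case_nat (y - x) v)) / norm (y - x)) \<longlongrightarrow> 0) (at x)"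
    using L_dc[OF j x] unfolding tendsto_cong[OF eq] .
qed

end


context cctx begin

lemma sem_conv:
  assumes f: "f \<in> W" and j: "enat j \<le> k" and e: "e > 0"
  shows "\<forall>\<^sub>F a in F. Ck k U (n a) \<and> (\<forall>x\<in>U. \<bar>f x\<bar> * ereal (mopnorm j (\<lambda>v. hderiv j (n a) x v - L j x v)) \<le> ereal e)"
proof -
  have E: "\<forall>\<^sub>F (a, b) in F \<times>\<^sub>F F. wseminorm U f j (\<lambda>x. n a x - n b x) < ereal e"
    using cau f j e by blast
  obtain Pf Pg where PP: "eventually Pf F" "eventually Pg F"
    "\<And>a b. Pf a \<Longrightarrow> Pg b \<Longrightarrow> wseminorm U f j (\<lambda>x. n a x - n b x) < ereal e \<and> Ck k U (n a) \<and> Ck k U (n b)"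
    using eventually_conj[OF E evCk2] unfolding eventually_prod_filter by fastforce
  show ?thesis using PP(1)
  proof (rule eventually_mono)
    fix a assume a: "Pf a"
    obtain b0 where "Pg b0" using eventually_happens'[OF Fne PP(2)] by blast
    then have ca: "Ck k U (n a)" using PP(3)[OF a] by blast
    have "\<forall>x\<in>U. \<bar>f x\<bar> * ereal (mopnorm j (\<lambda>v. hderiv j (n a) x v - L j x v)) \<le> ereal e"
    proof
      fix x assume x: "x \<in> U"
      define Ma where "Ma = (\<lambda>v. hderiv j (n a) x v - L j x v)"
      have Mabm: "bounded_multilinear j Ma" unfolding Ma_def by (intro bm_diff Ck_bm[OF ca j x] L_bm[OF x j])
      have ma0: "0 \<le> mopnorm j Ma" by (rule mopnorm_nonneg[OF Mabm])
      have key: "\<exists>mb. 0 \<le> mb \<and> \<bar>f x\<bar> * ereal mb < ereal e \<and> mopnorm j Ma \<le> mb + \<epsilon>" if \<epsilon>: "\<epsilon> > 0" for \<epsilon>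
      proof -
        obtain b where b: "Pg b" and ub: "Ck k U (n b)"
          "\<forall>y\<in>{x}. \<forall>v. (\<forall>i<j. norm (v i) \<le> 1) \<longrightarrow> norm (hderiv j (n b) y v - L j y v) \<le> \<epsilon>"
          using eventually_happens'[OF Fne eventually_conj[OF PP(2) unif1[of "{x}" j \<epsilon>]]] x j \<epsilon> by auto
        have w: "wseminorm U f j (\<lambda>x. n a x - n b x) < ereal e" and cb: "Ck k U (n b)"
          using PP(3)[OF a b] by auto
        define Mb where "Mb = (\<lambda>v. hderiv j (n a) x v - hderiv j (n b) x v)"
        define Q where "Q = (\<lambda>v. hderiv j (n b) x v - L j x v)"
        have Mbbm: "bounded_multilinear j Mb" unfolding Mb_def by (intro bm_diff Ck_bm[OF ca j x] Ck_bm[OF cb j x])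
        have Qbm: "bounded_multilinear j Q" unfolding Q_def by (intro bm_diff Ck_bm[OF cb j x] L_bm[OF x j])
        have Qle: "mopnorm j Q \<le> \<epsilon>" unfolding Q_def by (rule mopnorm_le) (use ub in auto)
        have hd: "hderiv j (\<lambda>x. n a x - n b x) x = Mb"
          unfolding Mb_def by (rule ext) (rule hderiv_diff[OF U ca cb j x])
        have "\<bar>f x\<bar> * ereal (mopnorm j Mb) \<le> wseminorm U f j (\<lambda>x. n a x - n b x)"
          unfolding wseminorm_def hd[symmetric] by (rule SUP_upper[OF x])
        then have lt: "\<bar>f x\<bar> * ereal (mopnorm j Mb) < ereal e" using w by simp
        have "mopnorm j Ma \<le> mopnorm j Mb + mopnorm j Q"
          by (rule mopnorm_split[OF Mbbm Qbm]) (simp add: Ma_def Mb_def Q_def)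
        then have "mopnorm j Ma \<le> mopnorm j Mb + \<epsilon>" using Qle by simp
        then show ?thesis using lt mopnorm_nonneg[OF Mbbm] by blast
      qed
      have ac: "(\<exists>c\<ge>0. \<bar>f x\<bar> = ereal c) \<or> \<bar>f x\<bar> = \<infinity>" by (rule abs_ereal_cases)
      then show "\<bar>f x\<bar> * ereal (mopnorm j (\<lambda>v. hderiv j (n a) x v - L j x v)) \<le> ereal e"
      proof (elim disjE exE conjE)
        fix c assume fin: "c \<ge> 0" "\<bar>f x\<bar> = ereal c"
        have "c * mopnorm j Ma \<le> e"
        proof (rule le_eps[of c _ e])
          show "0 \<le> c" by (rule fin(1))
          fix \<epsilon> :: real assume \<epsilon>: "\<epsilon> > 0"
          obtain mb where mb: "0 \<le> mb" "\<bar>f x\<bar> * ereal mb < ereal e" "mopnorm j Ma \<le> mb + \<epsilon>"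
            using key[OF \<epsilon>] by blast
          have "c * mb < e" using mb(2) fin(2) by simp
          moreover have "c * mopnorm j Ma \<le> c * mb + c * \<epsilon>"
            using mult_left_mono[OF mb(3) fin(1)] by (simp add: algebra_simps)
          ultimately show "c * mopnorm j Ma \<le> e + \<epsilon> * c" by (simp add: algebra_simps)
        qed
        then show ?thesis using fin(2) by (simp add: Ma_def)
      next
        assume inf: "\<bar>f x\<bar> = \<infinity>"
        have "mopnorm j Ma \<le> 0"
        proof (rule le_eps[of 1])
          fix \<epsilon> :: real assume \<epsilon>: "\<epsilon> > 0"
          obtain mb where mb: "0 \<le> mb" "\<bar>f x\<bar> * ereal mb < ereal e" "mopnorm j Ma \<le> mb + \<epsilon>"
            using key[OF \<epsilon>] by blast
          have "mb = 0"
          proof (rule ccontr)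
            assume "mb \<noteq> 0"
            then have "mb > 0" using mb(1) by simp
            then have "\<bar>f x\<bar> * ereal mb = \<infinity>" using inf by simp
            then show False using mb(2) by simp
          qed
          then show "mopnorm j Ma \<le> 0 + \<epsilon> * 1" using mb(3) by simp
        qed simp
        then have "mopnorm j Ma = 0" using ma0 by simp
        then have z: "mopnorm j (\<lambda>v. hderiv j (n a) x v - L j x v) = 0" by (simp add: Ma_def)
        show ?thesis unfolding z using e by (simp add: zero_ereal_def[symmetric])
      qed
    qed
    then show "Ck k U (n a) \<and> (\<forall>x\<in>U. \<bar>f x\<bar> * ereal (mopnorm j (\<lambda>v. hderiv j (n a) x v - L j x v)) \<le> ereal e)"
      using ca by blast
  qed
qed

end


context cctx begin

lemma gl_fin:
  assumes f: "f \<in> W" and j: "enat j \<le> k"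
  shows "wseminorm U f j gl < \<infinity>"
proof -
  obtain a where a1: "n a \<in> CkW k U W" and a2: "Ck k U (n a)"
    and a3: "\<forall>x\<in>U. \<bar>f x\<bar> * ereal (mopnorm j (\<lambda>v. hderiv j (n a) x v - L j x v)) \<le> ereal 1"
    using eventually_happens'[OF Fne eventually_conj[OF evC sem_conv[OF f j, of 1]]] by auto
  have wa: "wseminorm U f j (n a) < \<infinity>" using a1 f j unfolding CkW_def by blast
  have "wseminorm U f j gl \<le> wseminorm U f j (n a) + 1"
    unfolding wseminorm_def[of U f j gl]
  proof (rule SUP_least)
    fix x assume x: "x \<in> U"
    have hx: "hderiv j gl x = L j x" by (rule ident'[OF j x])
    define Da where "Da = hderiv j (n a) x"
    define Ma where "Ma = (\<lambda>v. Da v - L j x v)"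
    define Q where "Q = (\<lambda>v. L j x v - Da v)"
    have bDa: "bounded_multilinear j Da" unfolding Da_def by (rule Ck_bm[OF a2 j x])
    have bMa: "bounded_multilinear j Ma" unfolding Ma_def by (intro bm_diff bDa L_bm[OF x j])
    have bQ: "bounded_multilinear j Q" unfolding Q_def by (intro bm_diff bDa L_bm[OF x j])
    have up: "\<bar>f x\<bar> * ereal (mopnorm j Da) \<le> wseminorm U f j (n a)"
      unfolding wseminorm_def Da_def by (rule SUP_upper[OF x])
    have a3x: "\<bar>f x\<bar> * ereal (mopnorm j Ma) \<le> 1" using a3 x unfolding Ma_def Da_def by (simp add: one_ereal_def)
    have QM: "mopnorm j Q \<le> mopnorm j Ma"
    proof (rule mopnorm_le)
      fix v :: "nat \<Rightarrow> 'a" assume v: "\<forall>i<j. norm (v i) \<le> 1"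
      have "norm (Q v) = norm (Ma v)" unfolding Q_def Ma_def by (rule norm_minus_commute)
      also have "\<dots> \<le> mopnorm j Ma" by (rule mopnorm_upper[OF bMa v])
      finally show "norm (Q v) \<le> mopnorm j Ma" .
    qed
    have sp: "mopnorm j (L j x) \<le> mopnorm j Da + mopnorm j Q"
      by (rule mopnorm_split[OF bDa bQ]) (simp add: Q_def)
    have m0: "0 \<le> mopnorm j Ma" by (rule mopnorm_nonneg[OF bMa])
    have d0: "0 \<le> mopnorm j Da" by (rule mopnorm_nonneg[OF bDa])
    have ac: "(\<exists>c\<ge>0. \<bar>f x\<bar> = ereal c) \<or> \<bar>f x\<bar> = \<infinity>" by (rule abs_ereal_cases)
    then show "\<bar>f x\<bar> * ereal (mopnorm j (hderiv j gl x)) \<le> wseminorm U f j (n a) + 1"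
      unfolding hx
    proof (elim disjE exE conjE)
      fix c assume c: "c \<ge> 0" "\<bar>f x\<bar> = ereal c"
      have "c * mopnorm j (L j x) \<le> c * mopnorm j Da + c * mopnorm j Ma"
        using mult_left_mono[OF order_trans[OF sp add_left_mono[OF QM]] c(1)] by (simp add: algebra_simps)
      then have "ereal (c * mopnorm j (L j x)) \<le> ereal (c * mopnorm j Da) + ereal (c * mopnorm j Ma)" by simp
      also have "\<dots> \<le> wseminorm U f j (n a) + 1"
        using up a3x c(2) by (intro add_mono) auto
      finally show "\<bar>f x\<bar> * ereal (mopnorm j (L j x)) \<le> wseminorm U f j (n a) + 1" using c(2) by simp
    next
      assume inf: "\<bar>f x\<bar> = \<infinity>"
      have "mopnorm j Ma = 0"
      proof (rule ccontr)
        assume "mopnorm j Ma \<noteq> 0"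
        then have "mopnorm j Ma > 0" using m0 by simp
        then have "\<bar>f x\<bar> * ereal (mopnorm j Ma) = \<infinity>" using inf by simp
        then show False using a3x by simp
      qed
      then have "mopnorm j (L j x) \<le> mopnorm j Da" using sp QM by simp
      then have "\<bar>f x\<bar> * ereal (mopnorm j (L j x)) \<le> \<bar>f x\<bar> * ereal (mopnorm j Da)"
        by (intro ereal_mult_left_mono) auto
      also have "\<dots> \<le> wseminorm U f j (n a)" by (rule up)
      also have "\<dots> \<le> wseminorm U f j (n a) + 1"
      proof -
        have "0 \<le> \<bar>f x\<bar> * ereal (mopnorm j Da)" using d0 by simp
        then have "0 \<le> wseminorm U f j (n a)" using up by (rule order_trans)
        then show ?thesis by (intro add_increasing2) auto
      qed
      finally show "\<bar>f x\<bar> * ereal (mopnorm j (L j x)) \<le> wseminorm U f j (n a) + 1" .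
    qed
  qed
  also have "wseminorm U f j (n a) + 1 < \<infinity>" using wa by (cases "wseminorm U f j (n a)") auto
  finally show ?thesis .
qed

lemma main_ex: "\<exists>g\<in>CkW k U W. \<forall>f\<in>W. \<forall>j. enat j \<le> k \<longrightarrow> (\<forall>e>0. \<forall>\<^sub>F a in F.
         wseminorm U f j (\<lambda>x. n a x - g x) < ereal e)"
proof (intro bexI[of _ gl] ballI allI impI)
  fix f j and e :: real assume f: "f \<in> W" and j: "enat j \<le> k" and e: "e > 0"
  have e2: "e / 2 > 0" using e by simp
  show "\<forall>\<^sub>F a in F. wseminorm U f j (\<lambda>x. n a x - gl x) < ereal e"
    using sem_conv[OF f j e2]
  proof (rule eventually_mono)
    fix a assume h: "Ck k U (n a) \<and> (\<forall>x\<in>U. \<bar>f x\<bar> * ereal (mopnorm j (\<lambda>v. hderiv j (n a) x v - L j x v)) \<le> ereal (e / 2))"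
    have ca: "Ck k U (n a)" using h by blast
    have "wseminorm U f j (\<lambda>x. n a x - gl x) \<le> ereal (e / 2)"
      unfolding wseminorm_def
    proof (rule SUP_least)
      fix x assume x: "x \<in> U"
      have hd: "hderiv j (\<lambda>x. n a x - gl x) x = (\<lambda>v. hderiv j (n a) x v - L j x v)"
        by (rule ext) (simp only: hderiv_diff[OF U ca gl_Ck j x] ident[OF j x])
      show "\<bar>f x\<bar> * ereal (mopnorm j (hderiv j (\<lambda>x. n a x - gl x) x)) \<le> ereal (e / 2)"
        unfolding hd using h x by blast
    qed
    also have "ereal (e / 2) < ereal e" using e by simp
    finally show "wseminorm U f j (\<lambda>x. n a x - gl x) < ereal e" .
  qed
next
  show "gl \<in> CkW k U W" unfolding CkW_def using gl_Ck gl_fin by blast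
qed

end

theorem mainTheorem13:
  fixes U :: "'a::real_normed_vector set" and k :: enat
    and W :: "('a \<Rightarrow> ereal) set"
  assumes "open U" and "U \<noteq> {}"
    and "\<forall>K. compact K \<and> K \<subseteq> U \<longrightarrow> (\<exists>f\<in>W. (INF x\<in>K. \<bar>f x\<bar>) > 0)"
  shows "\<forall>(net :: 'i \<Rightarrow> 'a \<Rightarrow> 'b::banach) F. CkW_complete k U W net F"
proof (intro allI)
  fix net :: "'i \<Rightarrow> 'a \<Rightarrow> 'b" and F :: "'i filter"
  show "CkW_complete k U W net F" unfolding CkW_complete_def
  proof (intro impI)
    assume h: "F \<noteq> bot \<and> (\<forall>\<^sub>F i in F. net i \<in> CkW k U W) \<and>
     (\<forall>f\<in>W. \<forall>j. enat j \<le> k \<longrightarrow> (\<forall>e>0. \<forall>\<^sub>F (a, b) in F \<times>\<^sub>F F.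
         wseminorm U f j (\<lambda>x. net a x - net b x) < ereal e))"
    have c: "cctx U k W net F" unfolding cctx_def using assms(1,3) h by blast
    interpret cctx U k W net F by (rule c)
    show "\<exists>g\<in>CkW k U W. \<forall>f\<in>W. \<forall>j. enat j \<le> k \<longrightarrow> (\<forall>e>0. \<forall>\<^sub>F a in F.
         wseminorm U f j (\<lambda>x. net a x - g x) < ereal e)"
      by (rule main_ex)
  qed
qed


end
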